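(* Let $n^*_1,n^*_2\ge1$, $n^*=n^*_1+n^*_2$, and let $\psi$ be a log-convex Archimedean generator with $\phi=\psi^{-1}$. Let $X_1,\dots,X_{n^*}$ be dependent nonnegative random variables sharing an Archimedean copula with generator $\psi$, with $X_i\sim F_1(\lambda_1x)$ for $i\le n^*_1$ and $X_j\sim F_2(\lambda_2x)$ for $j>n^*_1$; let $Y_1,\dots,Y_{n^*}$ be dependent nonnegative random variables sharing an Archimedean copula with generator $\psi$, with $Y_i\sim F_1(\mu_1x)$ for $i\le n^*_1$ and $Y_j\sim F_2(\mu_2x)$ for $j>n^*_1$ ($\lambda_k,\mu_k>0$). Let $X_{n^*:n^*}(n^*_1,n^*_2)=\max_iX_i$, $Y_{n^*:n^*}(n^*_1,n^*_2)=\max_iY_i$, and write $\boldsymbol\lambda^*=(\lambda_1,\dots,\lambda_1,\lambda_2,\dots,\lambda_2)$, $\boldsymbol\mu^*=(\mu_1,\dots,\mu_1,\mu_2,\dots,\mu_2)$ (with $n^*_1$ copies of the first entry and $n^*_2$ of the second). Let either (a) $n^*_1\ge n^*_2$ and $\boldsymbol\lambda=(\lambda_1,\lambda_2),\boldsymbol\mu=(\mu_1,\mu_2)\in\mathcal E_+$, or (b) $n^*_1\le n^*_2$ and $\boldsymbol\lambda,\boldsymbol\mu\in\mathcal D_+$. Then: (i) if $\tilde r_1$ or $\tilde r_2$ is decreasing and $\tilde r_1(x)\ge\tilde r_2(x)$ for all $x>0$ in case (a) (respectively $\tilde r_1(x)\le\tilde r_2(x)$ for all $x>0$ in case (b)),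 then $\boldsymbol\lambda^*\succeq^w\boldsymbol\mu^*$ implies $Y_{n^*:n^*}(n^*_1,n^*_2)\le_{st}X_{n^*:n^*}(n^*_1,n^*_2)$; (ii) if $\tilde r_1=\tilde r_2=\tilde r$ and $\tilde r$ is decreasing, then $\boldsymbol\lambda^*\succeq^w\boldsymbol\mu^*$ implies $Y_{n^*:n^*}(n^*_1,n^*_2)\le_{st}X_{n^*:n^*}(n^*_1,n^*_2)$.
   Context: $Z\sim F(\lambda x)$ means $Z$ has distribution function $x\mapsto F(\lambda x)$. Archimedean copula: a generator is a continuous nonincreasing $\psi:[0,\infty)\to[0,1]$ with $\psi(0)=1$, $\psi(\infty)=0$, which is $m$-monotone; $\phi=\psi^{-1}$; $Z_1,\dots,Z_m$ with marginal distribution functions $G_i$ share an Archimedean copula with generator $\psi$ if $P(Z_1\le z_1,\dots,Z_m\le z_m)=\psi(\sum_i\phi(G_i(z_i)))$. $F_1,F_2$ are absolutely continuous distribution functions on $[0,\infty)$ with densities $f_k$ and reversed hazard rates $\tilde r_k=f_k/F_k$. $\mathcal E_+=\{(x_1,x_2):0<x_1\le x_2\}$, $\mathcal D_+=\{(x_1,x_2):x_1\ge x_2>0\}$. For $\boldsymbol a,\boldsymbol b\in\mathbb R^k$ with increasingly ordered coordinates: $\boldsymbol a\succeq^w\boldsymbol b$ means $\sum_{i=1}^lb_{(i)}\ge\sum_{i=1}^la_{(i)}$ for all $l$. $U\le_{st}V$ means $P(U>x)\le P(V>x)$ for all $x$. Increasing/decreasing are in the weak sense. *)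

theory Defs
  imports "HOL-Probability.Probability"
begin

definition m_monotone :: "nat \<Rightarrow> (real \<Rightarrow> real) \<Rightarrow> bool" where
  "m_monotone d psi \<longleftrightarrow>
     (if d \<le> 1 then (\<forall>x>0. 0 \<le> psi x) \<and> antimono_on {0<..} psi
      else (\<forall>k<d-2. \<forall>x>0. (deriv ^^ k) psi differentiable (at x)) \<and>
           (\<forall>k\<le>d-2. \<forall>x>0. 0 \<le> (-1::real) ^ k * (deriv ^^ k) psi x) \<and>
           antimono_on {0<..} (\<lambda>x. (-1::real) ^ (d-2) * (deriv ^^ (d-2)) psi x) \<and>
           convex_on {0<..} (\<lambda>x. (-1::real) ^ (d-2) * (deriv ^^ (d-2)) psi x))"

definition arch_generator :: "nat \<Rightarrow> (real \<Rightarrow> real) \<Rightarrow> bool" where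
  "arch_generator m psi \<longleftrightarrow>
     continuous_on {0..} psi \<and> antimono_on {0..} psi \<and> psi 0 = 1 \<and>
     (psi \<longlongrightarrow> 0) at_top \<and> (\<forall>x\<ge>0. 0 \<le> psi x \<and> psi x \<le> 1) \<and> m_monotone m psi"

definition log_convex_gen :: "(real \<Rightarrow> real) \<Rightarrow> bool" where
  "log_convex_gen psi \<longleftrightarrow> (\<forall>x\<ge>0. 0 < psi x) \<and> convex_on {0..} (\<lambda>x. ln (psi x))"

text \<open>phi = psi^{-1} (generalised inverse, for t in (0,1]).\<close>
definition gen_inv :: "(real \<Rightarrow> real) \<Rightarrow> real \<Rightarrow> real" where
  "gen_inv psi t = Inf {x. 0 \<le> x \<and> psi x = t}"

text \<open>Archimedean copula C(u_1..u_n) = psi(sum phi(u_i)); with the conventions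
  phi(0) in [0,oo], psi(oo) = 0 this is 0 as soon as some u_i = 0.\<close>
definition arch_copula :: "(real \<Rightarrow> real) \<Rightarrow> nat \<Rightarrow> (nat \<Rightarrow> real) \<Rightarrow> real" where
  "arch_copula psi n u =
     (if \<exists>i<n. u i = 0 then 0 else psi (\<Sum>i<n. gen_inv psi (u i)))"

definition shares_arch_copula ::
  "'a measure \<Rightarrow> (real \<Rightarrow> real) \<Rightarrow> nat \<Rightarrow> (nat \<Rightarrow> 'a \<Rightarrow> real) \<Rightarrow> bool" where
  "shares_arch_copula M psi n Z \<longleftrightarrow>
     (\<forall>z::nat \<Rightarrow> real.
        measure M {\<omega> \<in> space M. \<forall>i<n. Z i \<omega> \<le> z i}
        = arch_copula psi n (\<lambda>i. measure M {\<omega> \<in> space M. Z i \<omega> \<le> z i}))"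

definition ac_dist :: "(real \<Rightarrow> real) \<Rightarrow> (real \<Rightarrow> real) \<Rightarrow> bool" where
  "ac_dist F f \<longleftrightarrow> (\<forall>x. 0 \<le> f x) \<and> (\<forall>x<0. F x = 0) \<and>
     (\<forall>x\<ge>0. (f has_integral F x) {0..x}) \<and> (F \<longlongrightarrow> 1) at_top"

definition rev_hazard :: "(real \<Rightarrow> real) \<Rightarrow> (real \<Rightarrow> real) \<Rightarrow> real \<Rightarrow> real" where
  "rev_hazard F f x = f x / F x"

definition weak_supmaj :: "real list \<Rightarrow> real list \<Rightarrow> bool" where
  "weak_supmaj a b \<longleftrightarrow> length a = length b \<and>
     (\<forall>l\<le>length a. sum_list (take l (sort a)) \<le> sum_list (take l (sort b)))"

definition st_le :: "'a measure \<Rightarrow> ('a \<Rightarrow> real) \<Rightarrow> 'b measure \<Rightarrow> ('b \<Rightarrow> real) \<Rightarrow> bool" where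
  "st_le M U N V \<longleftrightarrow>
     (\<forall>x. measure M {\<omega> \<in> space M. U \<omega> > x} \<le> measure N {\<omega> \<in> space N. V \<omega> > x})"

definition max_stat :: "nat \<Rightarrow> (nat \<Rightarrow> 'a \<Rightarrow> real) \<Rightarrow> 'a \<Rightarrow> real" where
  "max_stat n Z \<omega> = Max ((\<lambda>i. Z i \<omega>) ` {..<n})"

end

theory Submission
  imports Defs
begin

lemma ac_int:
  assumes "ac_dist F f" "0 \<le> x"
  shows "(f has_integral F x) {0..x}" "f integrable_on {0..x}" "F x = integral {0..x} f"
  using assms unfolding ac_dist_def by (auto simp: integral_unique)

lemma ac_fnn: "ac_dist F f \<Longrightarrow> 0 \<le> f x"
  unfolding ac_dist_def by auto

lemma ac_le0: assumes "ac_dist F f" "x \<le> 0" shows "F x = 0"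
proof (cases "x < 0")
  case True then show ?thesis using assms unfolding ac_dist_def by auto
next
  case False
  then have "x = 0" using assms by auto
  then show ?thesis using ac_int(3)[OF assms(1), of 0] by simp
qed

lemma ac_diff:
  assumes "ac_dist F f" "0 \<le> a" "a \<le> b"
  shows "f integrable_on {a..b}" "F b - F a = integral {a..b} f"
proof -
  have ib: "f integrable_on {0..b}" using ac_int[OF assms(1)] assms by auto
  then show "f integrable_on {a..b}" by (rule integrable_subinterval_real) (use assms in auto)
  have "integral {0..a} f + integral {a..b} f = integral {0..b} f"
    using Henstock_Kurzweil_Integration.integral_combine[of 0 a b f] assms ib by auto
  then show "F b - F a = integral {a..b} f" using ac_int(3)[OF assms(1)] assms by auto
qed

lemma ac_nonneg: assumes "ac_dist F f" shows "0 \<le> F x"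
proof (cases "x \<le> 0")
  case True then show ?thesis using ac_le0[OF assms] by simp
next
  case False
  then have "F x - F 0 = integral {0..x} f" using ac_diff[OF assms, of 0 x] by auto
  moreover have "0 \<le> integral {0..x} f"
    by (rule integral_nonneg) (use ac_diff[OF assms, of 0 x] False ac_fnn[OF assms] in auto)
  ultimately show ?thesis using ac_le0[OF assms, of 0] by simp
qed

lemma ac_mono: assumes "ac_dist F f" "x \<le> y" shows "F x \<le> F y"
proof (cases "x \<le> 0")
  case True then show ?thesis using ac_le0[OF assms(1) True] ac_nonneg[OF assms(1)] by simp
next
  case False
  then have "F y - F x = integral {x..y} f" using ac_diff[OF assms(1), of x y] assms by auto
  moreover have "0 \<le> integral {x..y} f"
    by (rule integral_nonneg) (use ac_diff[OF assms(1), of x y] False assms ac_fnn[OF assms(1)] in auto)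
  ultimately show ?thesis by simp
qed

lemma ac_lim: "ac_dist F f \<Longrightarrow> (F \<longlongrightarrow> 1) at_top"
  unfolding ac_dist_def by auto

lemma ac_le1: assumes "ac_dist F f" shows "F x \<le> 1"
proof (rule tendsto_lowerbound[OF ac_lim[OF assms]])
  show "\<forall>\<^sub>F y in at_top. F x \<le> F y"
    using eventually_ge_at_top[of x] by eventually_elim (use ac_mono[OF assms] in auto)
qed simp

lemma ac_cont: assumes "ac_dist F f" "0 < x" shows "isCont F x"
proof -
  have "continuous_on {0..x+1} (\<lambda>t. integral {0..t} f)"
    by (rule indefinite_integral_continuous_1) (use ac_int[OF assms(1), of "x+1"] assms in auto)
  then have "continuous_on {0<..<x+1} (\<lambda>t. integral {0..t} f)"
    by (rule continuous_on_subset) auto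
  then have "continuous_on {0<..<x+1} F"
    by (rule continuous_on_eq) (use ac_int(3)[OF assms(1)] in auto)
  then show ?thesis using assms by (simp add: continuous_on_eq_continuous_at)
qed

lemma step_low:
  assumes F: "ac_dist F f" and "0 \<le> s" "0 \<le> h" "0 \<le> c"
    and le: "\<forall>t\<in>{s..s+h}. c * F t \<le> f t"
  shows "F s * (1 + c * h) \<le> F (s + h)"
proof -
  have d: "F (s+h) - F s = integral {s..s+h} f" "f integrable_on {s..s+h}"
    using ac_diff[OF F, of s "s+h"] assms by auto
  have "integral {s..s+h} (\<lambda>_. c * F s) \<le> integral {s..s+h} f"
  proof (rule integral_le)
    fix t assume t: "t \<in> {s..s+h}"
    have "c * F s \<le> c * F t" using ac_mono[OF F, of s t] t assms by (auto intro: mult_left_mono)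
    also have "\<dots> \<le> f t" using le t by auto
    finally show "c * F s \<le> f t" .
  qed (use d in auto)
  moreover have "integral {s..s+h} (\<lambda>_. c * F s) = h * (c * F s)"
    using assms(3) by (simp add: content_real)
  moreover have "F s * (1 + c * h) = F s + h * (c * F s)" by (simp add: algebra_simps)
  ultimately show ?thesis using d by linarith
qed

lemma step_up:
  assumes F: "ac_dist F f" and "0 \<le> s" "0 \<le> h" "0 \<le> c"
    and le: "\<forall>t\<in>{s..s+h}. f t \<le> c * F t"
  shows "F (s + h) - F s \<le> c * h * F (s + h)"
proof -
  have d: "F (s+h) - F s = integral {s..s+h} f" "f integrable_on {s..s+h}"
    using ac_diff[OF F, of s "s+h"] assms by auto
  have "integral {s..s+h} f \<le> integral {s..s+h} (\<lambda>_. c * F (s+h))"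
  proof (rule integral_le)
    fix t assume t: "t \<in> {s..s+h}"
    have "f t \<le> c * F t" using le t by auto
    also have "\<dots> \<le> c * F (s+h)" using ac_mono[OF F, of t "s+h"] t assms by (auto intro: mult_left_mono)
    finally show "f t \<le> c * F (s+h)" .
  qed (use d in auto)
  moreover have "integral {s..s+h} (\<lambda>_. c * F (s+h)) = h * (c * F (s+h))"
    using assms(3) by (simp add: content_real)
  moreover have "c * h * F (s + h) = h * (c * F (s+h))" by (simp add: algebra_simps)
  ultimately show ?thesis using d by linarith
qed

lemma iter_low:
  assumes F: "ac_dist F f" and "0 \<le> a" "0 \<le> h" "0 \<le> c"
    and le: "\<forall>t\<in>{a..b}. c * F t \<le> f t" and "a + real N * h \<le> b"
  shows "k \<le> N \<Longrightarrow> F a * (1 + c * h) ^ k \<le> F (a + real k * h)"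
proof (induction k)
  case 0 then show ?case by simp
next
  case (Suc k)
  have s: "F (a + real k * h) * (1 + c * h) \<le> F (a + real k * h + h)"
  proof (rule step_low[OF F])
    show "\<forall>t\<in>{a + real k * h..a + real k * h + h}. c * F t \<le> f t"
    proof
      fix t assume t: "t \<in> {a + real k * h..a + real k * h + h}"
      have "real k * h + h \<le> real N * h" using Suc.prems assms
        by (metis add.commute mult_right_mono of_nat_Suc of_nat_le_iff distrib_right mult_1)
      moreover have "0 \<le> real k * h" using assms(3) by simp
      moreover have "a + real k * h \<le> t" "t \<le> a + real k * h + h" using t by auto
      ultimately have "a \<le> t" "t \<le> b" using \<open>a + real N * h \<le> b\<close> \<open>0 \<le> a\<close> by linarith+
      then have "t \<in> {a..b}" by simp
      then show "c * F t \<le> f t" using le by auto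
    qed
  qed (use assms in auto)
  have "F a * (1 + c * h) ^ Suc k = (F a * (1 + c * h) ^ k) * (1 + c * h)" by simp
  also have "\<dots> \<le> F (a + real k * h) * (1 + c * h)"
    using Suc assms by (intro mult_right_mono) auto
  also have "\<dots> \<le> F (a + real (Suc k) * h)" using s by (simp add: algebra_simps)
  finally show ?case .
qed

lemma iter_up:
  assumes F: "ac_dist F f" and "0 \<le> a" "0 \<le> h" "0 \<le> c" "c * h \<le> 1"
    and le: "\<forall>t\<in>{a..b}. f t \<le> c * F t" and "a + real N * h \<le> b"
  shows "k \<le> N \<Longrightarrow> F (a + real k * h) * (1 - c * h) ^ k \<le> F a"
proof (induction k)
  case 0 then show ?case by simp
next
  case (Suc k)
  have s: "F (a + real k * h + h) - F (a + real k * h) \<le> c * h * F (a + real k * h + h)"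
  proof (rule step_up[OF F])
    show "\<forall>t\<in>{a + real k * h..a + real k * h + h}. f t \<le> c * F t"
    proof
      fix t assume t: "t \<in> {a + real k * h..a + real k * h + h}"
      have "real k * h + h \<le> real N * h" using Suc.prems assms
        by (metis add.commute mult_right_mono of_nat_Suc of_nat_le_iff distrib_right mult_1)
      moreover have "0 \<le> real k * h" using assms(3) by simp
      moreover have "a + real k * h \<le> t" "t \<le> a + real k * h + h" using t by auto
      ultimately have "a \<le> t" "t \<le> b" using \<open>a + real N * h \<le> b\<close> \<open>0 \<le> a\<close> by linarith+
      then have "t \<in> {a..b}" by simp
      then show "f t \<le> c * F t" using le by auto
    qed
  qed (use assms in auto)
  have s2: "F (a + real (Suc k) * h) * (1 - c * h) \<le> F (a + real k * h)"
    using s by (simp add: algebra_simps)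
  have "F (a + real (Suc k) * h) * (1 - c * h) ^ Suc k
      = (F (a + real (Suc k) * h) * (1 - c * h)) * (1 - c * h) ^ k" by simp
  also have "\<dots> \<le> F (a + real k * h) * (1 - c * h) ^ k"
    using s2 assms by (intro mult_right_mono) auto
  also have "\<dots> \<le> F a" using Suc by simp
  finally show ?case .
qed

lemma grow_low:
  assumes F: "ac_dist F f" and "0 \<le> a" "a \<le> b" "0 \<le> c"
    and le: "\<forall>t\<in>{a..b}. c * F t \<le> f t"
  shows "F a * exp (c * (b - a)) \<le> F b"
proof -
  have lim: "(\<lambda>n. F a * (1 + c * (b - a) / real n) ^ n) \<longlonglongrightarrow> F a * exp (c * (b - a))"
    by (intro tendsto_mult tendsto_const tendsto_exp_limit_sequentially)
  show ?thesis
  proof (rule LIMSEQ_le_const2[OF lim], intro exI allI impI)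
    fix n :: nat assume n: "1 \<le> n"
    define h where "h = (b - a) / real n"
    have h: "0 \<le> h" "a + real n * h = b" using n assms by (auto simp: h_def)
    have "F a * (1 + c * h) ^ n \<le> F (a + real n * h)"
      by (rule iter_low[OF F _ _ _ le]) (use assms h in auto)
    then show "F a * (1 + c * (b - a) / real n) ^ n \<le> F b" using h by (simp add: h_def)
  qed
qed

lemma grow_up:
  assumes F: "ac_dist F f" and "0 \<le> a" "a \<le> b" "0 \<le> c"
    and le: "\<forall>t\<in>{a..b}. f t \<le> c * F t"
  shows "F b \<le> F a * exp (c * (b - a))"
proof -
  have lim: "(\<lambda>n. F b * (1 + (- (c * (b - a))) / real n) ^ n) \<longlonglongrightarrow> F b * exp (- (c * (b - a)))"
    by (intro tendsto_mult tendsto_const tendsto_exp_limit_sequentially)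
  have "F b * exp (- (c * (b - a))) \<le> F a"
  proof (rule LIMSEQ_le_const2[OF lim])
    obtain N :: nat where N: "c * (b - a) \<le> real N" using real_arch_simple by blast
    show "\<exists>N. \<forall>n\<ge>N. F b * (1 + - (c * (b - a)) / real n) ^ n \<le> F a"
    proof (intro exI allI impI)
      fix n :: nat assume n: "max 1 N \<le> n"
      define h where "h = (b - a) / real n"
      have h: "0 \<le> h" "a + real n * h = b" using n assms by (auto simp: h_def)
      have "c * h \<le> 1"
      proof -
        have "c * (b - a) \<le> real n" using N n by linarith
        then show ?thesis using n by (simp add: h_def field_simps)
      qed
      then have "F (a + real n * h) * (1 - c * h) ^ n \<le> F a"
        by (intro iter_up[OF F _ _ _ _ le]) (use assms h in auto)
      then show "F b * (1 + - (c * (b - a)) / real n) ^ n \<le> F a" using h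
        by (simp add: h_def)
    qed
  qed
  then have "F b * exp (- (c * (b - a))) * exp (c * (b - a)) \<le> F a * exp (c * (b - a))"
    by (intro mult_right_mono) auto
  moreover have "F b * exp (- (c * (b - a))) * exp (c * (b - a)) = F b"
    by (simp add: exp_minus)
  ultimately show ?thesis by simp
qed

lemma rh_nonneg: "ac_dist F f \<Longrightarrow> 0 \<le> rev_hazard F f x"
  unfolding rev_hazard_def using ac_fnn ac_nonneg by (metis divide_nonneg_nonneg)

lemma rh_eq: "0 < F x \<Longrightarrow> f x = rev_hazard F f x * F x"
  unfolding rev_hazard_def by simp

lemma cmp_core:
  assumes F1: "ac_dist F1 f1" and F2: "ac_dist F2 f2"
    and g0: "\<And>x. 0 \<le> g x"
    and gl: "\<And>u v y. 0 < u \<Longrightarrow> u \<le> y \<Longrightarrow> y \<le> v \<Longrightarrow> g v \<le> rev_hazard F1 f1 y"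
    and gu: "\<And>u v y. 0 < u \<Longrightarrow> u \<le> y \<Longrightarrow> y \<le> v \<Longrightarrow> rev_hazard F2 f2 y \<le> g u"
    and t: "0 < t" and pos: "\<And>s. t \<le> s \<Longrightarrow> 0 < F1 s \<and> 0 < F2 s"
  shows "F1 t \<le> F2 t"
proof -
  define \<Phi> where "\<Phi> s = ln (F1 s) - ln (F2 s)" for s
  have piece: "g (u + h) * h - g u * h \<le> \<Phi> (u + h) - \<Phi> u" if u: "t \<le> u" and h: "0 \<le> h" for u h
  proof -
    have a: "F1 u * exp (g (u+h) * ((u+h) - u)) \<le> F1 (u+h)"
    proof (rule grow_low[OF F1])
      show "\<forall>y\<in>{u..u+h}. g (u+h) * F1 y \<le> f1 y"
      proof
        fix y assume y: "y \<in> {u..u+h}"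
        have p: "0 < F1 y" using pos y u by auto
        have "g (u+h) * F1 y \<le> rev_hazard F1 f1 y * F1 y"
          using gl[of u y "u+h"] y u t p by (intro mult_right_mono) auto
        then show "g (u+h) * F1 y \<le> f1 y" using rh_eq[of F1 y f1] p by simp
      qed
    qed (use u t h g0 in auto)
    have b: "F2 (u+h) \<le> F2 u * exp (g u * ((u+h) - u))"
    proof (rule grow_up[OF F2])
      show "\<forall>y\<in>{u..u+h}. f2 y \<le> g u * F2 y"
      proof
        fix y assume y: "y \<in> {u..u+h}"
        have p: "0 < F2 y" using pos y u by auto
        have "rev_hazard F2 f2 y * F2 y \<le> g u * F2 y"
          using gu[of u y "u+h"] y u t p by (intro mult_right_mono) auto
        then show "f2 y \<le> g u * F2 y" using rh_eq[of F2 y f2] p by simp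
      qed
    qed (use u t h g0 in auto)
    have p1: "0 < F1 u" "0 < F2 u" "0 < F1 (u+h)" "0 < F2 (u+h)" using pos u h by auto
    have "ln (F1 u * exp (g (u+h) * h)) \<le> ln (F1 (u+h))"
      using a p1 by (subst ln_le_cancel_iff) auto
    then have a': "ln (F1 u) + g (u+h) * h \<le> ln (F1 (u+h))" using p1 by (simp add: ln_mult)
    have "ln (F2 (u+h)) \<le> ln (F2 u * exp (g u * h))"
      using b p1 by (subst ln_le_cancel_iff) auto
    then have b': "ln (F2 (u+h)) \<le> ln (F2 u) + g u * h" using p1 by (simp add: ln_mult)
    show ?thesis using a' b' unfolding \<Phi>_def by linarith
  qed
  have iter: "h * (g (t + real k * h) - g t) \<le> \<Phi> (t + real k * h) - \<Phi> t" if h: "0 \<le> h" for h k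
  proof (induction k)
    case 0 then show ?case by simp
  next
    case (Suc k)
    have kh: "0 \<le> real k * h" using h by simp
    have "g (t + real k * h + h) * h - g (t + real k * h) * h
          \<le> \<Phi> (t + real k * h + h) - \<Phi> (t + real k * h)"
      by (rule piece) (use kh h in auto)
    then show ?case using Suc by (simp add: algebra_simps)
  qed
  have mono: "\<Phi> t \<le> \<Phi> T" if T: "t \<le> T" for T
  proof -
    have lim: "(\<lambda>n. \<Phi> t - (T - t) * g t / real n) \<longlonglongrightarrow> \<Phi> t - 0"
      by (intro tendsto_diff tendsto_const tendsto_divide_0[OF tendsto_const]
          filterlim_real_sequentially[THEN filterlim_at_top_imp_at_infinity])
    show ?thesis
    proof (rule LIMSEQ_le_const2[OF lim[simplified]], intro exI allI impI)
      fix n :: nat assume n: "1 \<le> n"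
      define h where "h = (T - t) / real n"
      have h: "0 \<le> h" "t + real n * h = T" using n T by (auto simp: h_def)
      have "h * (g (t + real n * h) - g t) \<le> \<Phi> (t + real n * h) - \<Phi> t" by (rule iter[OF h(1)])
      then have "h * (g T - g t) \<le> \<Phi> T - \<Phi> t" using h by simp
      moreover have "h * (- g t) \<le> h * (g T - g t)" using g0[of T] h by (intro mult_left_mono) auto
      moreover have "h * (- g t) = - ((T - t) * g t / real n)" by (simp add: h_def)
      ultimately show "\<Phi> t - (T - t) * g t / real n \<le> \<Phi> T" by linarith
    qed
  qed
  have "(\<Phi> \<longlongrightarrow> ln 1 - ln 1) at_top"
    unfolding \<Phi>_def by (intro tendsto_diff tendsto_ln ac_lim[OF F1] ac_lim[OF F2]) auto
  then have "\<Phi> t \<le> 0"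
    by (intro tendsto_lowerbound[of \<Phi> 0 at_top]) (auto intro!: eventually_mono[OF eventually_ge_at_top[of t]] mono)
  then have "ln (F1 t) \<le> ln (F2 t)" unfolding \<Phi>_def by simp
  then show ?thesis using pos[of t] by simp
qed

lemma anti: "antimono_on A f \<Longrightarrow> a \<in> A \<Longrightarrow> b \<in> A \<Longrightarrow> a \<le> b \<Longrightarrow> f b \<le> (f a :: real)"
  by (drule monotone_onD) auto

lemma g_exists:
  fixes r1 r2 :: "real \<Rightarrow> real"
  assumes le: "\<forall>x>0. r2 x \<le> r1 x" and am: "antimono_on {0<..} r1 \<or> antimono_on {0<..} r2"
    and nn: "\<And>x. 0 \<le> r1 x" "\<And>x. 0 \<le> r2 x"
  shows "\<exists>g. (\<forall>x. 0 \<le> g x) \<and> (\<forall>u v y. 0 < u \<longrightarrow> u \<le> y \<longrightarrow> y \<le> v \<longrightarrow> g v \<le> r1 y)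
             \<and> (\<forall>u v y. 0 < u \<longrightarrow> u \<le> y \<longrightarrow> y \<le> v \<longrightarrow> r2 y \<le> g u)"
proof (cases "antimono_on {0<..} r1")
  case True
  show ?thesis
  proof (intro exI[of _ r1] conjI allI impI)
    fix u v y :: real assume "0 < u" "u \<le> y" "y \<le> v"
    then show "r1 v \<le> r1 y" using anti[OF True, of y v] by auto
    have "r1 y \<le> r1 u" using anti[OF True, of u y] \<open>0 < u\<close> \<open>u \<le> y\<close> by auto
    moreover have "r2 y \<le> r1 y" using le \<open>0 < u\<close> \<open>u \<le> y\<close> by simp
    ultimately show "r2 y \<le> r1 u" by linarith
  qed (use nn in auto)
next
  case False
  then have A: "antimono_on {0<..} r2" using am by auto
  show ?thesis
  proof (intro exI[of _ r2] conjI allI impI)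
    fix u v y :: real assume "0 < u" "u \<le> y" "y \<le> v"
    then have "r2 v \<le> r2 y" using anti[OF A, of y v] by auto
    moreover have "r2 y \<le> r1 y" using le \<open>0 < u\<close> \<open>u \<le> y\<close> by simp
    ultimately show "r2 v \<le> r1 y" by linarith
    show "r2 y \<le> r2 u" using anti[OF A, of u y] \<open>0 < u\<close> \<open>u \<le> y\<close> by auto
  qed (use nn in auto)
qed

lemma cmp:
  assumes F1: "ac_dist F1 f1" and F2: "ac_dist F2 f2"
    and le: "\<forall>x>0. rev_hazard F2 f2 x \<le> rev_hazard F1 f1 x"
    and am: "antimono_on {0<..} (rev_hazard F1 f1) \<or> antimono_on {0<..} (rev_hazard F2 f2)"
    and t: "0 < t" and pos: "\<And>s. t \<le> s \<Longrightarrow> 0 < F1 s \<and> 0 < F2 s"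
  shows "F1 t \<le> F2 t"
proof -
  obtain g where g: "\<forall>x. 0 \<le> g x"
    "\<forall>u v y. 0 < u \<longrightarrow> u \<le> y \<longrightarrow> y \<le> v \<longrightarrow> g v \<le> rev_hazard F1 f1 y"
    "\<forall>u v y. 0 < u \<longrightarrow> u \<le> y \<longrightarrow> y \<le> v \<longrightarrow> rev_hazard F2 f2 y \<le> g u"
    using g_exists[OF le am rh_nonneg[OF F1] rh_nonneg[OF F2]] by blast
  show ?thesis
    by (rule cmp_core[OF F1 F2, of g]) (use g t pos in auto)
qed

lemma gen_inv_prop:
  assumes gen: "arch_generator m psi" and u: "0 < u" "u \<le> 1"
  shows "0 \<le> gen_inv psi u" "psi (gen_inv psi u) = u"
proof -
  have c: "continuous_on {0..} psi" and p0: "psi 0 = 1" and lim: "(psi \<longlongrightarrow> 0) at_top"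
    using gen unfolding arch_generator_def by auto
  have "\<forall>\<^sub>F x in at_top. psi x < u" using order_tendstoD(2)[OF lim u(1)] .
  then have "\<forall>\<^sub>F x in at_top. psi x < u \<and> 0 \<le> x" using eventually_ge_at_top[of 0]
    by eventually_elim auto
  then obtain N where "\<forall>n\<ge>N. psi n < u \<and> 0 \<le> n" unfolding eventually_at_top_linorder by blast
  then have b: "psi N < u" "0 \<le> N" by auto
  have cb: "continuous_on {0..N} psi" using continuous_on_subset[OF c, of "{0..N}"] by auto
  have "\<exists>x. 0 \<le> x \<and> x \<le> N \<and> psi x = u"
    by (rule IVT2'[OF _ _ b(2) cb]) (use b(1) p0 u(2) in simp_all)
  then have ne: "{x. 0 \<le> x \<and> psi x = u} \<noteq> {}" by blast
  have cl0: "closed {x \<in> {0..}. psi x = u}"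
    by (rule continuous_closed_preimage_constant[OF c]) simp
  have eqS: "{x \<in> {0..}. psi x = u} = {x. 0 \<le> x \<and> psi x = u}" by auto
  have bb: "bdd_below {x. 0 \<le> x \<and> psi x = u}" by (rule bdd_belowI[of _ 0]) simp
  have "Inf {x. 0 \<le> x \<and> psi x = u} \<in> {x. 0 \<le> x \<and> psi x = u}"
    by (rule closed_contains_Inf[OF ne bb]) (use cl0 eqS in simp)
  then show "0 \<le> gen_inv psi u" "psi (gen_inv psi u) = u" unfolding gen_inv_def by auto
qed

lemma gen_inv_anti:
  assumes gen: "arch_generator m psi" and u: "0 < u" "u \<le> w" "w \<le> 1"
  shows "gen_inv psi w \<le> gen_inv psi u"
proof (rule ccontr)
  assume c: "\<not> ?thesis"
  have am: "antimono_on {0..} psi" using gen unfolding arch_generator_def by auto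
  have "psi (gen_inv psi w) \<le> psi (gen_inv psi u)"
    using anti[OF am, of "gen_inv psi u" "gen_inv psi w"] c gen_inv_prop[OF gen, of u] u by auto
  then have "w \<le> u" using gen_inv_prop[OF gen, of u] gen_inv_prop[OF gen, of w] u by auto
  then have "u = w" using u by auto
  then show False using c by auto
qed

lemma frac_cross: "(p::real) > 0 \<Longrightarrow> q > 0 \<Longrightarrow> X / p \<le> Y / q \<Longrightarrow> X * q \<le> Y * p"
  by (simp add: field_simps)

lemma convex_chord:
  fixes h :: "real \<Rightarrow> real"
  assumes cv: "convex_on {0..} h" and o: "0 \<le> B2" "B2 < A2" "A2 \<le> B1" "B1 \<le> A1"
  shows "(h B1 - h A1) * (A2 - B2) \<le> (h B2 - h A2) * (A1 - B1)"
proof (cases "B1 = A1")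
  case True then show ?thesis by simp
next
  case False
  then have lt: "B1 < A1" using o by auto
  have s1: "(h B2 - h A2) / (B2 - A2) \<le> (h B2 - h A1) / (B2 - A1)"
    using convex_on_slope_le(1)[OF cv, of B2 A1 A2] o lt by auto
  have s2: "(h B2 - h A1) / (B2 - A1) \<le> (h B1 - h A1) / (B1 - A1)"
    using convex_on_slope_le(2)[OF cv, of B2 A1 B1] o lt by auto
  have "(h B2 - h A2) / (B2 - A2) \<le> (h B1 - h A1) / (B1 - A1)" using s1 s2 by linarith
  moreover have "(h B2 - h A2) / (B2 - A2) = (h A2 - h B2) / (A2 - B2)"
    by (metis minus_diff_eq minus_divide_divide)
  moreover have "(h B1 - h A1) / (B1 - A1) = (h A1 - h B1) / (A1 - B1)"
    by (metis minus_diff_eq minus_divide_divide)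
  ultimately have "(h A2 - h B2) / (A2 - B2) \<le> (h A1 - h B1) / (A1 - B1)" by simp
  then have "(h A2 - h B2) * (A1 - B1) \<le> (h A1 - h B1) * (A2 - B2)"
    using frac_cross[of "A2 - B2" "A1 - B1"] o lt by auto
  then show ?thesis by (simp add: algebra_simps)
qed

lemma psi_step:
  assumes gen: "arch_generator m psi" and lc: "log_convex_gen psi"
    and p: "0 < pA1" "pA1 \<le> pB1" "pB1 \<le> pA2" "pA2 \<le> pB2" "pB2 \<le> 1"
    and hyp: "real n2 * (ln pB2 - ln pA2) \<le> real n1 * (ln pB1 - ln pA1)"
  shows "real n1 * gen_inv psi pB1 + real n2 * gen_inv psi pA2
         \<le> real n1 * gen_inv psi pA1 + real n2 * gen_inv psi pB2"
proof -
  define A1 where "A1 = gen_inv psi pA1"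
  define B1 where "B1 = gen_inv psi pB1"
  define A2 where "A2 = gen_inv psi pA2"
  define B2 where "B2 = gen_inv psi pB2"
  have o: "B2 \<le> A2" "A2 \<le> B1" "B1 \<le> A1" "0 \<le> B2"
    unfolding A1_def B1_def A2_def B2_def
    using gen_inv_anti[OF gen] gen_inv_prop(1)[OF gen] p by (meson order_trans order_less_le_trans)+
  have v: "psi A1 = pA1" "psi B1 = pB1" "psi A2 = pA2" "psi B2 = pB2"
    unfolding A1_def B1_def A2_def B2_def using gen_inv_prop(2)[OF gen] p by auto
  have cv: "convex_on {0..} (\<lambda>x. ln (psi x))" using lc unfolding log_convex_gen_def by auto
  show ?thesis
  proof (cases "B2 = A2")
    case True
    then show ?thesis using o unfolding A1_def B1_def A2_def B2_def
      by (simp add: mult_left_mono algebra_simps)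
  next
    case False
    then have lt: "B2 < A2" using o by auto
    have "pA2 \<noteq> pB2" using False unfolding A2_def B2_def by auto
    then have pl: "pA2 < pB2" using p by auto
    define D where "D = ln pB2 - ln pA2"
    have D: "0 < D" unfolding D_def using pl p by simp
    have ch: "(ln pB1 - ln pA1) * (A2 - B2) \<le> D * (A1 - B1)"
      using convex_chord[OF cv o(4) lt o(2) o(3)] v unfolding D_def by simp
    have "D * (real n2 * (A2 - B2)) = (real n2 * D) * (A2 - B2)" by simp
    also have "\<dots> \<le> (real n1 * (ln pB1 - ln pA1)) * (A2 - B2)"
      using hyp lt unfolding D_def by (intro mult_right_mono) auto
    also have "\<dots> = real n1 * ((ln pB1 - ln pA1) * (A2 - B2))" by simp
    also have "\<dots> \<le> real n1 * (D * (A1 - B1))" using ch by (intro mult_left_mono) auto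
    also have "\<dots> = D * (real n1 * (A1 - B1))" by simp
    finally have "real n2 * (A2 - B2) \<le> real n1 * (A1 - B1)" using D by simp
    then show ?thesis unfolding A1_def B1_def A2_def B2_def by (simp add: algebra_simps)
  qed
qed

lemma F2_pos:
  assumes F1: "ac_dist F1 f1" and F2: "ac_dist F2 f2"
    and le: "\<forall>x>0. rev_hazard F2 f2 x \<le> rev_hazard F1 f1 x"
    and am: "antimono_on {0<..} (rev_hazard F1 f1) \<or> antimono_on {0<..} (rev_hazard F2 f2)"
    and p: "0 < p" "p \<le> q" "q \<le> r" and F1p: "0 < F1 p" and F2r: "0 < F2 r"
  shows "0 < F2 q"
proof (rule ccontr)
  assume "\<not> 0 < F2 q"
  then have z: "F2 q = 0" using ac_nonneg[OF F2, of q] by auto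
  define S where "S = {s \<in> {q..r}. F2 s = 0}"
  have cont: "continuous_on {q..r} F2"
    by (rule continuous_at_imp_continuous_on) (use ac_cont[OF F2] p in auto)
  have cl: "closed S" unfolding S_def by (rule continuous_closed_preimage_constant[OF cont]) simp
  have ne: "S \<noteq> {}" using z p unfolding S_def by auto
  have bb: "bdd_above S" unfolding S_def by (rule bdd_aboveI[of _ r]) auto
  define t0 where "t0 = Sup S"
  have t0S: "t0 \<in> S" unfolding t0_def by (rule closed_contains_Sup[OF ne bb cl])
  then have t0: "q \<le> t0" "t0 \<le> r" "F2 t0 = 0" unfolding S_def by auto
  have pos2: "0 < F2 s" if s: "t0 < s" for s
  proof (cases "s \<le> r")
    case True
    have "s \<notin> S" using cSup_upper[OF _ bb, of s] s unfolding t0_def by auto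
    then have "F2 s \<noteq> 0" using True s t0 unfolding S_def by auto
    then show ?thesis using ac_nonneg[OF F2, of s] by auto
  next
    case False
    then show ?thesis using ac_mono[OF F2, of r s] F2r by auto
  qed
  have pos1: "0 < F1 s" if "p \<le> s" for s using ac_mono[OF F1 that] F1p by auto
  have cmpS: "F1 s - F2 s \<le> 0" if s: "t0 < s" for s
  proof -
    have "F1 s \<le> F2 s"
      by (rule cmp[OF F1 F2 le am]) (use s t0 p pos1 pos2 in auto)
    then show ?thesis by simp
  qed
  have "isCont (\<lambda>s. F1 s - F2 s) t0" using ac_cont[OF F1] ac_cont[OF F2] t0 p by auto
  then have "((\<lambda>s. F1 s - F2 s) \<longlongrightarrow> F1 t0 - F2 t0) (at_right t0)"
    unfolding isCont_def by (rule tendsto_mono[OF at_le, rotated]) simp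
  then have "F1 t0 - F2 t0 \<le> 0"
  proof (rule tendsto_upperbound)
    show "\<forall>\<^sub>F s in at_right t0. F1 s - F2 s \<le> 0"
      using eventually_at_right_less[of t0] by eventually_elim (rule cmpS)
  qed simp
  then show False using pos1[of t0] t0 p by auto
qed

lemma core:
  assumes F1: "ac_dist F1 f1" and F2: "ac_dist F2 f2"
    and gen: "arch_generator m psi" and lc: "log_convex_gen psi"
    and le: "\<forall>x>0. rev_hazard F2 f2 x \<le> rev_hazard F1 f1 x"
    and am: "antimono_on {0<..} (rev_hazard F1 f1) \<or> antimono_on {0<..} (rev_hazard F2 f2)"
    and pos: "0 < l1" "0 < m1" and o: "m1 \<le> m2" "l1 \<le> m1"
    and sm: "real n1 * l1 + real n2 * l2 \<le> real n1 * m1 + real n2 * m2"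
    and x: "0 < x" and a: "0 < F1 (l1 * x)" and b: "0 < F2 (l2 * x)"
  shows "0 < F1 (m1 * x) \<and> 0 < F2 (m2 * x) \<and>
    real n1 * gen_inv psi (F1 (m1 * x)) + real n2 * gen_inv psi (F2 (m2 * x))
    \<le> real n1 * gen_inv psi (F1 (l1 * x)) + real n2 * gen_inv psi (F2 (l2 * x))"
proof -
  have a1: "F1 (l1 * x) \<le> F1 (m1 * x)" using ac_mono[OF F1] o x by (simp add: mult_right_mono)
  then have pm1: "0 < F1 (m1 * x)" using a by simp
  have le1: "\<And>y. F1 y \<le> 1" "\<And>y. F2 y \<le> 1" using ac_le1[OF F1] ac_le1[OF F2] by auto
  show ?thesis
  proof (cases "l2 \<le> m2")
    case True
    have a2: "F2 (l2 * x) \<le> F2 (m2 * x)" using ac_mono[OF F2] True x by (simp add: mult_right_mono)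
    then have pm2: "0 < F2 (m2 * x)" using b by simp
    have "gen_inv psi (F1 (m1 * x)) \<le> gen_inv psi (F1 (l1 * x))"
      by (rule gen_inv_anti[OF gen a a1 le1(1)])
    moreover have "gen_inv psi (F2 (m2 * x)) \<le> gen_inv psi (F2 (l2 * x))"
      by (rule gen_inv_anti[OF gen b a2 le1(2)])
    ultimately show ?thesis using pm1 pm2
      by (intro conjI add_mono mult_left_mono) auto
  next
    case False
    then have lt: "m2 < l2" by simp
    have xs: "m1 * x \<le> m2 * x" "m2 * x \<le> l2 * x" "l1 * x \<le> m1 * x" "0 < m1 * x" "0 < l1 * x"
      using o lt x pos by (auto simp: mult_right_mono)
    have pm2: "0 < F2 (m2 * x)"
      by (rule F2_pos[OF F1 F2 le am xs(4) xs(1) xs(2) pm1 b])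
    have c12: "F1 (m2 * x) \<le> F2 (m2 * x)"
    proof (rule cmp[OF F1 F2 le am])
      show "0 < m2 * x" using xs by linarith
      fix s assume "m2 * x \<le> s"
      then show "0 < F1 s \<and> 0 < F2 s"
        using ac_mono[OF F1, of "m1 * x" s] ac_mono[OF F2, of "m2 * x" s] xs pm1 pm2 by auto
    qed
    obtain g where g: "\<forall>x. 0 \<le> g x"
      "\<forall>u v y. 0 < u \<longrightarrow> u \<le> y \<longrightarrow> y \<le> v \<longrightarrow> g v \<le> rev_hazard F1 f1 y"
      "\<forall>u v y. 0 < u \<longrightarrow> u \<le> y \<longrightarrow> y \<le> v \<longrightarrow> rev_hazard F2 f2 y \<le> g u"
      using g_exists[OF le am rh_nonneg[OF F1] rh_nonneg[OF F2]] by blast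
    define c where "c = g (m1 * x)"
    have c0: "0 \<le> c" using g unfolding c_def by auto
    have gl: "F1 (l1 * x) * exp (c * (m1 * x - l1 * x)) \<le> F1 (m1 * x)"
    proof (rule grow_low[OF F1 _ xs(3) c0])
      show "0 \<le> l1 * x" using xs by linarith
      show "\<forall>t\<in>{l1 * x..m1 * x}. c * F1 t \<le> f1 t"
      proof
        fix t assume t: "t \<in> {l1 * x..m1 * x}"
        have pt: "0 < F1 t" using ac_mono[OF F1, of "l1 * x" t] t a by auto
        have "c \<le> rev_hazard F1 f1 t" using g(2) t xs unfolding c_def by auto
        then have "c * F1 t \<le> rev_hazard F1 f1 t * F1 t" using pt by (intro mult_right_mono) auto
        then show "c * F1 t \<le> f1 t" using rh_eq[of F1 t f1] pt by simp
      qed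
    qed
    have gu: "F2 (l2 * x) \<le> F2 (m2 * x) * exp (c * (l2 * x - m2 * x))"
    proof (rule grow_up[OF F2 _ xs(2) c0])
      show "0 \<le> m2 * x" using xs by linarith
      show "\<forall>t\<in>{m2 * x..l2 * x}. f2 t \<le> c * F2 t"
      proof
        fix t assume t: "t \<in> {m2 * x..l2 * x}"
        have pt: "0 < F2 t" using ac_mono[OF F2, of "m2 * x" t] t pm2 by auto
        have "rev_hazard F2 f2 t \<le> c" using g(3) t xs unfolding c_def by auto
        then have "rev_hazard F2 f2 t * F2 t \<le> c * F2 t" using pt by (intro mult_right_mono) auto
        then show "f2 t \<le> c * F2 t" using rh_eq[of F2 t f2] pt by simp
      qed
    qed
    have L1: "ln (F1 (l1 * x)) + c * (m1 * x - l1 * x) \<le> ln (F1 (m1 * x))"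
    proof -
      have "ln (F1 (l1 * x) * exp (c * (m1 * x - l1 * x))) \<le> ln (F1 (m1 * x))"
        using gl a pm1 by (subst ln_le_cancel_iff) auto
      then show ?thesis using a by (simp add: ln_mult)
    qed
    have L2: "ln (F2 (l2 * x)) \<le> ln (F2 (m2 * x)) + c * (l2 * x - m2 * x)"
    proof -
      have "ln (F2 (l2 * x)) \<le> ln (F2 (m2 * x) * exp (c * (l2 * x - m2 * x)))"
        using gu b pm2 by (subst ln_le_cancel_iff) auto
      then show ?thesis using pm2 by (simp add: ln_mult)
    qed
    have nn: "real n2 * (l2 - m2) \<le> real n1 * (m1 - l1)" using sm by (simp add: algebra_simps)
    have cx: "0 \<le> c * x" using c0 x by simp
    have "real n2 * (ln (F2 (l2 * x)) - ln (F2 (m2 * x))) \<le> real n2 * (c * (l2 * x - m2 * x))"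
      using L2 by (intro mult_left_mono) auto
    also have "\<dots> = (real n2 * (l2 - m2)) * (c * x)" by (simp add: algebra_simps)
    also have "\<dots> \<le> (real n1 * (m1 - l1)) * (c * x)" using nn cx by (rule mult_right_mono)
    also have "\<dots> = real n1 * (c * (m1 * x - l1 * x))" by (simp add: algebra_simps)
    also have "\<dots> \<le> real n1 * (ln (F1 (m1 * x)) - ln (F1 (l1 * x)))"
      using L1 by (intro mult_left_mono) auto
    finally have hyp: "real n2 * (ln (F2 (l2 * x)) - ln (F2 (m2 * x)))
                  \<le> real n1 * (ln (F1 (m1 * x)) - ln (F1 (l1 * x)))" .
    have o2: "F1 (m1 * x) \<le> F2 (m2 * x)" using c12 ac_mono[OF F1 xs(1)] by linarith
    have o3: "F2 (m2 * x) \<le> F2 (l2 * x)" using ac_mono[OF F2 xs(2)] .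
    have "real n1 * gen_inv psi (F1 (m1 * x)) + real n2 * gen_inv psi (F2 (m2 * x))
         \<le> real n1 * gen_inv psi (F1 (l1 * x)) + real n2 * gen_inv psi (F2 (l2 * x))"
      by (rule psi_step[OF gen lc a a1 o2 o3 le1(2) hyp])
    then show ?thesis using pm1 pm2 by simp
  qed
qed

lemma max_gt:
  assumes "1 \<le> n"
  shows "(x < max_stat n X \<omega>) \<longleftrightarrow> \<not> (\<forall>i<n. X i \<omega> \<le> x)"
proof -
  have n0: "0 \<in> {..<n}" using assms by simp
  have "finite ((\<lambda>i. X i \<omega>) ` {..<n})" "(\<lambda>i. X i \<omega>) ` {..<n} \<noteq> {}" using n0 by blast+
  then show ?thesis unfolding max_stat_def by (subst Max_gr_iff) (auto simp: not_le)
qed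

lemma prob_max:
  assumes M: "prob_space M" and n: "1 \<le> n" and rv: "\<And>i. i < n \<Longrightarrow> X i \<in> borel_measurable M"
  shows "measure M {\<omega> \<in> space M. x < max_stat n X \<omega>}
         = 1 - measure M {\<omega> \<in> space M. \<forall>i<n. X i \<omega> \<le> x}"
proof -
  have sets: "{\<omega> \<in> space M. X i \<omega> \<le> x} \<in> sets M" if "i < n" for i
  proof -
    have [measurable]: "X i \<in> borel_measurable M" using rv that .
    show ?thesis by measurable
  qed
  have eq: "{\<omega> \<in> space M. \<forall>i<n. X i \<omega> \<le> x} = (\<Inter>i\<in>{..<n}. {\<omega> \<in> space M. X i \<omega> \<le> x})"
    using n by (auto; metis not_one_le_zero lessThan_iff neq0_conv)
  have A: "{\<omega> \<in> space M. \<forall>i<n. X i \<omega> \<le> x} \<in> sets M"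
    unfolding eq by (rule sets.finite_INT) (use n sets in \<open>auto simp: lessThan_empty_iff\<close>)
  have "{\<omega> \<in> space M. x < max_stat n X \<omega>} = space M - {\<omega> \<in> space M. \<forall>i<n. X i \<omega> \<le> x}"
    by (auto simp: max_gt[OF n])
  then show ?thesis using prob_space.prob_compl[OF M A] by simp
qed

lemma copval:
  assumes u: "\<forall>i<n1+n2. u i = (if i < n1 then a else b)" and n: "1 \<le> n1" "1 \<le> n2"
  shows "arch_copula psi (n1+n2) u =
     (if a = 0 \<or> b = 0 then 0 else psi (real n1 * gen_inv psi a + real n2 * gen_inv psi b))"
proof -
  have ex: "(\<exists>i<n1+n2. u i = 0) \<longleftrightarrow> a = 0 \<or> b = 0"
  proof
    assume "\<exists>i<n1+n2. u i = 0" then show "a = 0 \<or> b = 0" using u by (metis)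
  next
    assume "a = 0 \<or> b = 0"
    then show "\<exists>i<n1+n2. u i = 0"
    proof
      assume "a = 0" then show ?thesis using u n by (intro exI[of _ 0]) auto
    next
      assume "b = 0" then show ?thesis using u n by (intro exI[of _ n1]) auto
    qed
  qed
  have "(\<Sum>i<n1+n2. gen_inv psi (u i)) = (\<Sum>i\<in>{0..<n1}. gen_inv psi (u i)) + (\<Sum>i\<in>{n1..<n1+n2}. gen_inv psi (u i))"
    by (simp add: lessThan_atLeast0 sum.atLeastLessThan_concat)
  also have "\<dots> = (\<Sum>i\<in>{0..<n1}. gen_inv psi a) + (\<Sum>i\<in>{n1..<n1+n2}. gen_inv psi b)"
    using u by (intro arg_cong2[where f="(+)"] sum.cong) auto
  also have "\<dots> = real n1 * gen_inv psi a + real n2 * gen_inv psi b" by simp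
  finally show ?thesis unfolding arch_copula_def using ex by simp
qed

lemma side:
  fixes M :: "'a measure" and N :: "'b measure"
    and X :: "nat \<Rightarrow> 'a \<Rightarrow> real" and Y :: "nat \<Rightarrow> 'b \<Rightarrow> real"
  assumes n1: "n1 \<ge> 1" and n2: "n2 \<ge> 1"
    and gen: "arch_generator m psi"
    and F1: "ac_dist F1 f1" and F2: "ac_dist F2 f2"
    and M: "prob_space M" and N: "prob_space N"
    and Xrv: "\<And>i. i < n1 + n2 \<Longrightarrow> X i \<in> borel_measurable M"
    and Yrv: "\<And>i. i < n1 + n2 \<Longrightarrow> Y i \<in> borel_measurable N"
    and Xcop: "shares_arch_copula M psi (n1 + n2) X"
    and Ycop: "shares_arch_copula N psi (n1 + n2) Y"
    and Xm1: "\<And>i x. i < n1 \<Longrightarrow> measure M {\<omega> \<in> space M. X i \<omega> \<le> x} = F1 (l1 * x)"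
    and Xm2: "\<And>i x. n1 \<le> i \<Longrightarrow> i < n1 + n2 \<Longrightarrow>
                 measure M {\<omega> \<in> space M. X i \<omega> \<le> x} = F2 (l2 * x)"
    and Ym1: "\<And>i x. i < n1 \<Longrightarrow> measure N {\<omega> \<in> space N. Y i \<omega> \<le> x} = F1 (m1 * x)"
    and Ym2: "\<And>i x. n1 \<le> i \<Longrightarrow> i < n1 + n2 \<Longrightarrow>
                 measure N {\<omega> \<in> space N. Y i \<omega> \<le> x} = F2 (m2 * x)"
    and key: "\<And>x. 0 < F1 (l1 * x) \<Longrightarrow> 0 < F2 (l2 * x) \<Longrightarrow>
       0 < F1 (m1 * x) \<and> 0 < F2 (m2 * x) \<and>
       real n1 * gen_inv psi (F1 (m1 * x)) + real n2 * gen_inv psi (F2 (m2 * x))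
       \<le> real n1 * gen_inv psi (F1 (l1 * x)) + real n2 * gen_inv psi (F2 (l2 * x))"
  shows "st_le N (max_stat (n1 + n2) Y) M (max_stat (n1 + n2) X)"
  unfolding st_le_def
proof
  fix x :: real
  have n: "1 \<le> n1 + n2" using n1 by simp
  define PX where "PX = measure M {\<omega> \<in> space M. \<forall>i<n1+n2. X i \<omega> \<le> x}"
  define PY where "PY = measure N {\<omega> \<in> space N. \<forall>i<n1+n2. Y i \<omega> \<le> x}"
  have PX: "PX = (if F1 (l1 * x) = 0 \<or> F2 (l2 * x) = 0 then 0
      else psi (real n1 * gen_inv psi (F1 (l1 * x)) + real n2 * gen_inv psi (F2 (l2 * x))))"
    unfolding PX_def using Xcop[unfolded shares_arch_copula_def, rule_format, of "\<lambda>_. x"]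
    by (simp add: copval[OF _ n1 n2] Xm1 Xm2)
  have PY: "PY = (if F1 (m1 * x) = 0 \<or> F2 (m2 * x) = 0 then 0
      else psi (real n1 * gen_inv psi (F1 (m1 * x)) + real n2 * gen_inv psi (F2 (m2 * x))))"
    unfolding PY_def using Ycop[unfolded shares_arch_copula_def, rule_format, of "\<lambda>_. x"]
    by (simp add: copval[OF _ n1 n2] Ym1 Ym2)
  have "PX \<le> PY"
  proof (cases "F1 (l1 * x) = 0 \<or> F2 (l2 * x) = 0")
    case True
    then show ?thesis using PX unfolding PY_def by simp
  next
    case False
    then have a: "0 < F1 (l1 * x)" "0 < F2 (l2 * x)" using ac_nonneg[OF F1] ac_nonneg[OF F2]
      by (metis order_le_less)+
    note k = key[OF a]
    have am: "antimono_on {0..} psi" using gen unfolding arch_generator_def by auto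
    have g0: "0 \<le> gen_inv psi (F1 (m1 * x))" "0 \<le> gen_inv psi (F2 (m2 * x))"
      using gen_inv_prop(1)[OF gen] k ac_le1[OF F1] ac_le1[OF F2] by auto
    have "psi (real n1 * gen_inv psi (F1 (l1 * x)) + real n2 * gen_inv psi (F2 (l2 * x)))
       \<le> psi (real n1 * gen_inv psi (F1 (m1 * x)) + real n2 * gen_inv psi (F2 (m2 * x)))"
    proof (rule anti[OF am])
      have "0 \<le> real n1 * gen_inv psi (F1 (m1 * x)) + real n2 * gen_inv psi (F2 (m2 * x))"
        using g0 by simp
      then show "real n1 * gen_inv psi (F1 (m1 * x)) + real n2 * gen_inv psi (F2 (m2 * x)) \<in> {0..}"
        "real n1 * gen_inv psi (F1 (l1 * x)) + real n2 * gen_inv psi (F2 (l2 * x)) \<in> {0..}"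
        using k by auto
      show "real n1 * gen_inv psi (F1 (m1 * x)) + real n2 * gen_inv psi (F2 (m2 * x))
        \<le> real n1 * gen_inv psi (F1 (l1 * x)) + real n2 * gen_inv psi (F2 (l2 * x))" using k by auto
    qed
    then show ?thesis using PX PY k False by simp
  qed
  then show "measure N {\<omega> \<in> space N. x < max_stat (n1 + n2) Y \<omega>}
          \<le> measure M {\<omega> \<in> space M. x < max_stat (n1 + n2) X \<omega>}"
    using prob_max[OF M n Xrv, where x=x] prob_max[OF N n Yrv, where x=x] unfolding PX_def PY_def by simp
qed

lemma wsm:
  assumes w: "weak_supmaj xs ys"
    and mx: "mset xs = mset (replicate p a @ replicate q b)"
    and my: "mset ys = mset (replicate p c @ replicate q d)"
    and ab: "(a::real) \<le> b" and cd: "(c::real) \<le> d"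
  shows "real p * a \<le> real p * c \<and> real p * a + real q * b \<le> real p * c + real q * d"
proof -
  have sx: "sort xs = replicate p a @ replicate q b"
    by (rule properties_for_sort) (use mx ab in \<open>auto simp: sorted_append\<close>)
  have sy: "sort ys = replicate p c @ replicate q d"
    by (rule properties_for_sort) (use my cd in \<open>auto simp: sorted_append\<close>)
  have lx: "length xs = p + q" using arg_cong[OF mx, of size] by simp
  have W: "\<forall>l\<le>length xs. sum_list (take l (sort xs)) \<le> sum_list (take l (sort ys))"
    using w unfolding weak_supmaj_def by auto
  have "sum_list (take p (sort xs)) \<le> sum_list (take p (sort ys))" using W lx by auto
  then have 1: "real p * a \<le> real p * c" using sx sy by (simp add: sum_list_replicate)
  have "sum_list (take (p+q) (sort xs)) \<le> sum_list (take (p+q) (sort ys))" using W lx by auto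
  then have 2: "real p * a + real q * b \<le> real p * c + real q * d" using sx sy by (simp add: sum_list_replicate)
  show ?thesis using 1 2 by simp
qed

lemma xpos:
  assumes F: "ac_dist F f" and l: "0 < l" and p: "0 < F (l * x)" shows "0 < x"
proof (rule ccontr)
  assume "\<not> 0 < x"
  then have "l * x \<le> 0" using l by (simp add: mult_nonpos_nonneg mult_le_0_iff)
  then show False using ac_le0[OF F] p by simp
qed

theorem corollary3p1:
  fixes M :: "'a measure" and N :: "'b measure"
    and X :: "nat \<Rightarrow> 'a \<Rightarrow> real" and Y :: "nat \<Rightarrow> 'b \<Rightarrow> real"
    and psi F1 F2 f1 f2 :: "real \<Rightarrow> real"
    and n1 n2 :: nat and l1 l2 m1 m2 :: real
  assumes n1: "n1 \<ge> 1" and n2: "n2 \<ge> 1"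
    and gen: "arch_generator (n1 + n2) psi" and logconv: "log_convex_gen psi"
    and F1: "ac_dist F1 f1" and F2: "ac_dist F2 f2"
    and pos: "l1 > 0" "l2 > 0" "m1 > 0" "m2 > 0"
    and M: "prob_space M" and N: "prob_space N"
    and Xrv: "\<And>i. i < n1 + n2 \<Longrightarrow> X i \<in> borel_measurable M"
    and Yrv: "\<And>i. i < n1 + n2 \<Longrightarrow> Y i \<in> borel_measurable N"
    and Xnn: "\<And>i \<omega>. i < n1 + n2 \<Longrightarrow> \<omega> \<in> space M \<Longrightarrow> 0 \<le> X i \<omega>"
    and Ynn: "\<And>i \<omega>. i < n1 + n2 \<Longrightarrow> \<omega> \<in> space N \<Longrightarrow> 0 \<le> Y i \<omega>"
    and Xcop: "shares_arch_copula M psi (n1 + n2) X"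
    and Ycop: "shares_arch_copula N psi (n1 + n2) Y"
    and Xm1: "\<And>i x. i < n1 \<Longrightarrow> measure M {\<omega> \<in> space M. X i \<omega> \<le> x} = F1 (l1 * x)"
    and Xm2: "\<And>i x. n1 \<le> i \<Longrightarrow> i < n1 + n2 \<Longrightarrow>
                 measure M {\<omega> \<in> space M. X i \<omega> \<le> x} = F2 (l2 * x)"
    and Ym1: "\<And>i x. i < n1 \<Longrightarrow> measure N {\<omega> \<in> space N. Y i \<omega> \<le> x} = F1 (m1 * x)"
    and Ym2: "\<And>i x. n1 \<le> i \<Longrightarrow> i < n1 + n2 \<Longrightarrow>
                 measure N {\<omega> \<in> space N. Y i \<omega> \<le> x} = F2 (m2 * x)"
  shows
    "(n1 \<ge> n2 \<and> l1 \<le> l2 \<and> m1 \<le> m2 \<and>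
        (antimono_on {0<..} (rev_hazard F1 f1) \<or> antimono_on {0<..} (rev_hazard F2 f2)) \<and>
        (\<forall>x>0. rev_hazard F1 f1 x \<ge> rev_hazard F2 f2 x) \<and>
        weak_supmaj (replicate n1 l1 @ replicate n2 l2) (replicate n1 m1 @ replicate n2 m2)
      \<longrightarrow> st_le N (max_stat (n1 + n2) Y) M (max_stat (n1 + n2) X))
   \<and> (n1 \<le> n2 \<and> l1 \<ge> l2 \<and> m1 \<ge> m2 \<and>
        (antimono_on {0<..} (rev_hazard F1 f1) \<or> antimono_on {0<..} (rev_hazard F2 f2)) \<and>
        (\<forall>x>0. rev_hazard F1 f1 x \<le> rev_hazard F2 f2 x) \<and>
        weak_supmaj (replicate n1 l1 @ replicate n2 l2) (replicate n1 m1 @ replicate n2 m2)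
      \<longrightarrow> st_le N (max_stat (n1 + n2) Y) M (max_stat (n1 + n2) X))
   \<and> (((n1 \<ge> n2 \<and> l1 \<le> l2 \<and> m1 \<le> m2) \<or> (n1 \<le> n2 \<and> l1 \<ge> l2 \<and> m1 \<ge> m2)) \<and>
        (\<forall>x>0. rev_hazard F1 f1 x = rev_hazard F2 f2 x) \<and>
        antimono_on {0<..} (rev_hazard F1 f1) \<and>
        weak_supmaj (replicate n1 l1 @ replicate n2 l2) (replicate n1 m1 @ replicate n2 m2)
      \<longrightarrow> st_le N (max_stat (n1 + n2) Y) M (max_stat (n1 + n2) X))"
proof -
  note side' = side[OF n1 n2 gen F1 F2 M N Xrv Yrv Xcop Ycop Xm1 Xm2 Ym1 Ym2]
  have A: "st_le N (max_stat (n1 + n2) Y) M (max_stat (n1 + n2) X)"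
    if le: "\<forall>x>0. rev_hazard F2 f2 x \<le> rev_hazard F1 f1 x"
      and am: "antimono_on {0<..} (rev_hazard F1 f1) \<or> antimono_on {0<..} (rev_hazard F2 f2)"
      and o: "m1 \<le> m2" "l1 \<le> m1"
      and sm: "real n1 * l1 + real n2 * l2 \<le> real n1 * m1 + real n2 * m2"
  proof (rule side')
    fix x assume a: "0 < F1 (l1 * x)" and b: "0 < F2 (l2 * x)"
    show "0 < F1 (m1 * x) \<and> 0 < F2 (m2 * x) \<and>
       real n1 * gen_inv psi (F1 (m1 * x)) + real n2 * gen_inv psi (F2 (m2 * x))
       \<le> real n1 * gen_inv psi (F1 (l1 * x)) + real n2 * gen_inv psi (F2 (l2 * x))"
      by (rule core[OF F1 F2 gen logconv le am pos(1) pos(3) o sm xpos[OF F1 pos(1) a] a b])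
  qed
  have B: "st_le N (max_stat (n1 + n2) Y) M (max_stat (n1 + n2) X)"
    if le: "\<forall>x>0. rev_hazard F1 f1 x \<le> rev_hazard F2 f2 x"
      and am: "antimono_on {0<..} (rev_hazard F1 f1) \<or> antimono_on {0<..} (rev_hazard F2 f2)"
      and o: "m2 \<le> m1" "l2 \<le> m2"
      and sm: "real n2 * l2 + real n1 * l1 \<le> real n2 * m2 + real n1 * m1"
  proof (rule side')
    fix x assume a: "0 < F1 (l1 * x)" and b: "0 < F2 (l2 * x)"
    have am': "antimono_on {0<..} (rev_hazard F2 f2) \<or> antimono_on {0<..} (rev_hazard F1 f1)"
      using am by blast
    have "0 < F2 (m2 * x) \<and> 0 < F1 (m1 * x) \<and>
       real n2 * gen_inv psi (F2 (m2 * x)) + real n1 * gen_inv psi (F1 (m1 * x))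
       \<le> real n2 * gen_inv psi (F2 (l2 * x)) + real n1 * gen_inv psi (F1 (l1 * x))"
      by (rule core[OF F2 F1 gen logconv le am' pos(2) pos(4) o sm xpos[OF F1 pos(1) a] b a])
    then show "0 < F1 (m1 * x) \<and> 0 < F2 (m2 * x) \<and>
       real n1 * gen_inv psi (F1 (m1 * x)) + real n2 * gen_inv psi (F2 (m2 * x))
       \<le> real n1 * gen_inv psi (F1 (l1 * x)) + real n2 * gen_inv psi (F2 (l2 * x))"
      by (simp add: add.commute)
  qed
  have n1p: "0 < real n1" "0 < real n2" using n1 n2 by auto
  have WA: "l1 \<le> m1 \<and> real n1 * l1 + real n2 * l2 \<le> real n1 * m1 + real n2 * m2"
    if w: "weak_supmaj (replicate n1 l1 @ replicate n2 l2) (replicate n1 m1 @ replicate n2 m2)"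
      and "l1 \<le> l2" "m1 \<le> m2"
  proof -
    have "real n1 * l1 \<le> real n1 * m1 \<and> real n1 * l1 + real n2 * l2 \<le> real n1 * m1 + real n2 * m2"
      by (rule wsm[OF w]) (use that in auto)
    then show ?thesis using n1p by (simp add: mult_le_cancel_left_pos)
  qed
  have WB: "l2 \<le> m2 \<and> real n2 * l2 + real n1 * l1 \<le> real n2 * m2 + real n1 * m1"
    if w: "weak_supmaj (replicate n1 l1 @ replicate n2 l2) (replicate n1 m1 @ replicate n2 m2)"
      and "l2 \<le> l1" "m2 \<le> m1"
  proof -
    have "real n2 * l2 \<le> real n2 * m2 \<and> real n2 * l2 + real n1 * l1 \<le> real n2 * m2 + real n1 * m1"
      by (rule wsm[OF w]) (use that in \<open>auto simp: add.commute\<close>)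
    then show ?thesis using n1p by (simp add: mult_le_cancel_left_pos)
  qed
  show ?thesis
  proof (intro conjI impI)
    assume h: "n2 \<le> n1 \<and> l1 \<le> l2 \<and> m1 \<le> m2 \<and>
        (antimono_on {0<..} (rev_hazard F1 f1) \<or> antimono_on {0<..} (rev_hazard F2 f2)) \<and>
        (\<forall>x>0. rev_hazard F2 f2 x \<le> rev_hazard F1 f1 x) \<and>
        weak_supmaj (replicate n1 l1 @ replicate n2 l2) (replicate n1 m1 @ replicate n2 m2)"
    then show "st_le N (max_stat (n1 + n2) Y) M (max_stat (n1 + n2) X)"
      using A WA by blast
  next
    assume h: "n1 \<le> n2 \<and> l2 \<le> l1 \<and> m2 \<le> m1 \<and>
        (antimono_on {0<..} (rev_hazard F1 f1) \<or> antimono_on {0<..} (rev_hazard F2 f2)) \<and>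
        (\<forall>x>0. rev_hazard F1 f1 x \<le> rev_hazard F2 f2 x) \<and>
        weak_supmaj (replicate n1 l1 @ replicate n2 l2) (replicate n1 m1 @ replicate n2 m2)"
    then show "st_le N (max_stat (n1 + n2) Y) M (max_stat (n1 + n2) X)"
      using B WB by blast
  next
    assume h: "((n2 \<le> n1 \<and> l1 \<le> l2 \<and> m1 \<le> m2) \<or> (n1 \<le> n2 \<and> l2 \<le> l1 \<and> m2 \<le> m1)) \<and>
        (\<forall>x>0. rev_hazard F1 f1 x = rev_hazard F2 f2 x) \<and>
        antimono_on {0<..} (rev_hazard F1 f1) \<and>
        weak_supmaj (replicate n1 l1 @ replicate n2 l2) (replicate n1 m1 @ replicate n2 m2)"
    then have le1: "\<forall>x>0. rev_hazard F2 f2 x \<le> rev_hazard F1 f1 x"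
      and le2: "\<forall>x>0. rev_hazard F1 f1 x \<le> rev_hazard F2 f2 x"
      and am: "antimono_on {0<..} (rev_hazard F1 f1) \<or> antimono_on {0<..} (rev_hazard F2 f2)"
      by auto
    show "st_le N (max_stat (n1 + n2) Y) M (max_stat (n1 + n2) X)"
      using h A[OF le1 am] B[OF le2 am] WA WB by blast
  qed
qed

end
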